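(* Let $\{\mathcal{T}^\pi\}_{\pi\in\Pi}$ be a consistency operator, i.e. a family of maps $\mathcal{T}^\pi:\mathbb{R}^{\mathcal{S}}\to\mathbb{R}^{\mathcal{S}}$ indexed by policies $\pi\in\Pi$. (i) If $\mathcal{T}^\pi$ is linear, then it enables the greedy policy. (ii) If $\mathcal{T}^\pi$ enables the greedy policy, then there exists a linear consistency operator $\mathcal{T}^\pi_{\mathrm{linear}}$ such that for all $v\in\mathbb{R}^{\mathcal{S}}$ and $s\in\mathcal{S}$, $\max_{\pi\in\Pi}[\mathcal{T}^\pi v](s) = \max_{\pi\in\Pi}[\mathcal{T}^\pi_{\mathrm{linear}} v](s)$.
   Context: $\mathcal{S},\mathcal{A}$ are finite sets and $\Pi = \Delta(\mathcal{A})^{\mathcal{S}}$ is the set of all stationary (stochastic and deterministic) policies, a policy being $\pi\in\mathbb{R}^{\mathcal{S}\times\mathcal{A}}$ with $\pi[s,\cdot]\in\Delta(\mathcal{A})$ for each $s$. A consistency operator $\mathcal{T}^\pi$ enables the greedy policy if there is a function $g:\mathbb{R}^{\mathcal{S}}\times\mathcal{A}\to\mathbb{R}^{\mathcal{S}}$ such that for all $v\in\mathbb{R}^{\mathcal{S}}$ and $s\in\mathcal{S}$, $\max_{a\in\mathcal{A}} g(v,a)[s] = \max_{\pi\in\Pi}[\mathcal{T}^\pi v](s)$. It is linear if there is a function $f:\mathbb{R}^{\mathcal{S}}\to\mathbb{R}^{\mathcal{S}\times\mathcal{A}}$, independent of $\pi$, such that for all $\pi\in\Pi$, $v\in\mathbb{R}^{\mathcal{S}}$,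 $s\in\mathcal{S}$: $[\mathcal{T}^\pi v](s) = \langle \pi[s,\cdot], f(v)[s,\cdot]\rangle$. *)

theory Defs
  imports "HOL-Analysis.Analysis"
begin

definition policies :: "('s::finite \<Rightarrow> 'a::finite \<Rightarrow> real) set" where
  "policies = {pi. \<forall>s. (\<forall>a. 0 \<le> pi s a) \<and> (\<Sum>a\<in>UNIV. pi s a) = 1}"

type_synonym ('s, 'a) cons_op = "('s \<Rightarrow> 'a \<Rightarrow> real) \<Rightarrow> ('s \<Rightarrow> real) \<Rightarrow> ('s \<Rightarrow> real)"

definition is_max :: "real \<Rightarrow> real set \<Rightarrow> bool" where
  "is_max m X \<longleftrightarrow> m \<in> X \<and> (\<forall>x\<in>X. x \<le> m)"

definition max_pol :: "('s::finite, 'a::finite) cons_op \<Rightarrow> ('s \<Rightarrow> real) \<Rightarrow> 's \<Rightarrow> real \<Rightarrow> bool" where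
  "max_pol T v s m \<longleftrightarrow> is_max m ((\<lambda>pi. T pi v s) ` policies)"

definition enables_greedy :: "('s::finite, 'a::finite) cons_op \<Rightarrow> bool" where
  "enables_greedy T \<longleftrightarrow>
     (\<exists>g :: ('s \<Rightarrow> real) \<Rightarrow> 'a \<Rightarrow> ('s \<Rightarrow> real).
        \<forall>v s. max_pol T v s (Max (range (\<lambda>a. g v a s))))"

definition linear_op :: "('s::finite, 'a::finite) cons_op \<Rightarrow> bool" where
  "linear_op T \<longleftrightarrow>
     (\<exists>f :: ('s \<Rightarrow> real) \<Rightarrow> ('s \<Rightarrow> 'a \<Rightarrow> real).
        \<forall>pi\<in>policies. \<forall>v s. T pi v s = (\<Sum>a\<in>UNIV. pi s a * f v s a))"

end

theory Submission
  imports Defs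
begin

lemma key:
  fixes h :: "'a::finite \<Rightarrow> real" and s :: "'s::finite"
  shows "is_max (Max (range h)) ((\<lambda>pi::'s \<Rightarrow> 'a \<Rightarrow> real. \<Sum>a\<in>UNIV. pi s a * h a) ` policies)"
proof -
  let ?M = "Max (range h)"
  have "?M \<in> range h" by (rule Max_in) auto
  then obtain a0 where a0: "h a0 = ?M" by (metis imageE)
  define pi0 :: "'s \<Rightarrow> 'a \<Rightarrow> real" where "pi0 = (\<lambda>s' a. if a = a0 then 1 else 0)"
  have p0: "pi0 \<in> policies" unfolding policies_def pi0_def by simp
  have v0: "(\<Sum>a\<in>UNIV. pi0 s a * h a) = ?M" proof -
    have "(\<Sum>a\<in>UNIV. pi0 s a * h a) = (\<Sum>a\<in>UNIV. if a = a0 then h a else 0)"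
      unfolding pi0_def by (intro sum.cong) auto
    also have "\<dots> = h a0" by simp
    finally show ?thesis using a0 by simp
  qed
  have ub: "(\<Sum>a\<in>UNIV. pi s a * h a) \<le> ?M" if "pi \<in> policies" for pi
  proof -
    have "(\<Sum>a\<in>UNIV. pi s a * h a) \<le> (\<Sum>a\<in>UNIV. pi s a * ?M)"
      apply (rule sum_mono) apply (rule mult_left_mono)
      using that unfolding policies_def by auto
    also have "\<dots> = ?M" using that unfolding policies_def by (simp add: sum_distrib_right[symmetric])
    finally show ?thesis .
  qed
  show ?thesis unfolding is_max_def using p0 v0 ub by (metis (no_types, lifting) image_eqI image_iff)
qed

theorem lemma1:
  fixes T :: "('s::finite, 'a::finite) cons_op"
  shows "(linear_op T \<longrightarrow> enables_greedy T)
       \<and> (enables_greedy T \<longrightarrow>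
            (\<exists>T_lin :: ('s, 'a) cons_op. linear_op T_lin \<and>
               (\<forall>v s. \<exists>m. max_pol T v s m \<and> max_pol T_lin v s m)))"
proof (intro conjI impI)
  assume "linear_op T"
  then obtain f :: "('s \<Rightarrow> real) \<Rightarrow> ('s \<Rightarrow> 'a \<Rightarrow> real)" where
    f: "\<forall>pi\<in>policies. \<forall>v s. T pi v s = (\<Sum>a\<in>UNIV. pi s a * f v s a)"
    unfolding linear_op_def by blast
  have "max_pol T v s (Max (range (\<lambda>a. f v s a)))" for v s
  proof -
    have "(\<lambda>pi. T pi v s) ` policies = (\<lambda>pi. \<Sum>a\<in>UNIV. pi s a * f v s a) ` policies"
      using f by (auto intro!: image_cong)
    then show ?thesis unfolding max_pol_def using key[of "\<lambda>a. f v s a" s] by simp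
  qed
  then show "enables_greedy T" unfolding enables_greedy_def
    by (intro exI[where x="\<lambda>v a s. f v s a"]) simp
next
  assume "enables_greedy T"
  then obtain g :: "('s \<Rightarrow> real) \<Rightarrow> 'a \<Rightarrow> ('s \<Rightarrow> real)" where
    g: "\<forall>v s. max_pol T v s (Max (range (\<lambda>a. g v a s)))"
    unfolding enables_greedy_def by blast
  define TL :: "('s, 'a) cons_op" where "TL = (\<lambda>pi v s. \<Sum>a\<in>UNIV. pi s a * g v a s)"
  have "linear_op TL" unfolding linear_op_def TL_def
    by (rule exI[where x="\<lambda>v s a. g v a s"]) simp
  moreover have "max_pol TL v s (Max (range (\<lambda>a. g v a s)))" for v s
    unfolding max_pol_def TL_def using key[of "\<lambda>a. g v a s" s] by simp
  ultimately show "\<exists>T_lin :: ('s, 'a) cons_op. linear_op T_lin \<and>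
               (\<forall>v s. \<exists>m. max_pol T v s m \<and> max_pol T_lin v s m)"
    using g by blast
qed

end
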